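(* $\mathrm{Md}$ is a finite complete axiomatisation of the equational theory of cancellation meadows: for all $\Sigma_m$-terms $r,s$, $\mathrm{Md}\vdash r=s$ if and only if $r=s$ holds in every $\Sigma_m$-structure satisfying $\mathrm{Md}$ and the inverse law $\mathrm{IL}$.
   Context: $\Sigma_m=(0,1,+,\cdot,-,{}^{-1})$; $\mathrm{Md}$ is the set of equations $(x+y)+z=x+(y+z)$, $x+y=y+x$, $x+0=x$, $x+(-x)=0$, $(x\cdot y)\cdot z=x\cdot(y\cdot z)$, $x\cdot y=y\cdot x$, $1\cdot x=x$, $x\cdot(y+z)=x\cdot y+x\cdot z$, $(x^{-1})^{-1}=x$, $x\cdot(x\cdot x^{-1})=x$. The inverse law $\mathrm{IL}$ is the conditional axiom $x\neq 0\rightarrow x\cdot x^{-1}=1$. $\vdash$ is derivability in equational logic. *)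

theory Defs
  imports Main "HOL-Library.Infinite_Typeclass"
begin

datatype mterm =
    Var nat
  | Zero
  | One
  | Add mterm mterm
  | Mul mterm mterm
  | Neg mterm
  | Inv mterm

fun subst :: "(nat \<Rightarrow> mterm) \<Rightarrow> mterm \<Rightarrow> mterm" where
  "subst \<sigma> (Var i) = \<sigma> i"
| "subst \<sigma> Zero = Zero"
| "subst \<sigma> One = One"
| "subst \<sigma> (Add a b) = Add (subst \<sigma> a) (subst \<sigma> b)"
| "subst \<sigma> (Mul a b) = Mul (subst \<sigma> a) (subst \<sigma> b)"
| "subst \<sigma> (Neg a) = Neg (subst \<sigma> a)"
| "subst \<sigma> (Inv a) = Inv (subst \<sigma> a)"

inductive derivable :: "(mterm \<times> mterm) set \<Rightarrow> mterm \<Rightarrow> mterm \<Rightarrow> bool" for E where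
  ax: "(l, r) \<in> E \<Longrightarrow> derivable E (subst \<sigma> l) (subst \<sigma> r)"
| refl: "derivable E t t"
| sym: "derivable E t u \<Longrightarrow> derivable E u t"
| trans: "derivable E t u \<Longrightarrow> derivable E u v \<Longrightarrow> derivable E t v"
| cong_Add: "derivable E a a' \<Longrightarrow> derivable E b b' \<Longrightarrow> derivable E (Add a b) (Add a' b')"
| cong_Mul: "derivable E a a' \<Longrightarrow> derivable E b b' \<Longrightarrow> derivable E (Mul a b) (Mul a' b')"
| cong_Neg: "derivable E a a' \<Longrightarrow> derivable E (Neg a) (Neg a')"
| cong_Inv: "derivable E a a' \<Longrightarrow> derivable E (Inv a) (Inv a')"

definition Md :: "(mterm \<times> mterm) set" where
  "Md = (let x = Var 0; y = Var 1; z = Var 2 in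
   { (Add (Add x y) z, Add x (Add y z)),
     (Add x y, Add y x),
     (Add x Zero, x),
     (Add x (Neg x), Zero),
     (Mul (Mul x y) z, Mul x (Mul y z)),
     (Mul x y, Mul y x),
     (Mul One x, x),
     (Mul x (Add y z), Add (Mul x y) (Mul x z)),
     (Inv (Inv x), x),
     (Mul x (Mul x (Inv x)), x) })"

record 'a mstruct =
  car :: "'a set"
  zero :: 'a
  one :: 'a
  add :: "'a \<Rightarrow> 'a \<Rightarrow> 'a"
  mul :: "'a \<Rightarrow> 'a \<Rightarrow> 'a"
  neg :: "'a \<Rightarrow> 'a"
  inv :: "'a \<Rightarrow> 'a"

definition is_mstruct :: "('a, 'b) mstruct_scheme \<Rightarrow> bool" where
  "is_mstruct S \<longleftrightarrow>
     zero S \<in> car S \<and> one S \<in> car S \<and>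
     (\<forall>x\<in>car S. \<forall>y\<in>car S. add S x y \<in> car S \<and> mul S x y \<in> car S) \<and>
     (\<forall>x\<in>car S. neg S x \<in> car S \<and> inv S x \<in> car S)"

fun eval :: "('a, 'b) mstruct_scheme \<Rightarrow> (nat \<Rightarrow> 'a) \<Rightarrow> mterm \<Rightarrow> 'a" where
  "eval S v (Var i) = v i"
| "eval S v Zero = zero S"
| "eval S v One = one S"
| "eval S v (Add a b) = add S (eval S v a) (eval S v b)"
| "eval S v (Mul a b) = mul S (eval S v a) (eval S v b)"
| "eval S v (Neg a) = neg S (eval S v a)"
| "eval S v (Inv a) = inv S (eval S v a)"

definition valid_in :: "('a, 'b) mstruct_scheme \<Rightarrow> mterm \<Rightarrow> mterm \<Rightarrow> bool" where
  "valid_in S r s \<longleftrightarrow> (\<forall>v. (\<forall>i. v i \<in> car S) \<longrightarrow> eval S v r = eval S v s)"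

definition satisfies :: "('a, 'b) mstruct_scheme \<Rightarrow> (mterm \<times> mterm) set \<Rightarrow> bool" where
  "satisfies S E \<longleftrightarrow> (\<forall>(l, r)\<in>E. valid_in S l r)"

definition satisfies_IL :: "('a, 'b) mstruct_scheme \<Rightarrow> bool" where
  "satisfies_IL S \<longleftrightarrow> (\<forall>x\<in>car S. x \<noteq> zero S \<longrightarrow> mul S x (inv S x) = one S)"

definition cancellation_meadow :: "('a, 'b) mstruct_scheme \<Rightarrow> bool" where
  "cancellation_meadow S \<longleftrightarrow> is_mstruct S \<and> satisfies S Md \<and> satisfies_IL S"

end

theory Submission imports Defs "HOL-Library.Countable" begin

lemma eval_subst: "eval S v (subst \<sigma> t) = eval S (\<lambda>i. eval S v (\<sigma> i)) t"
  by (induction t) auto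

lemma eval_car: "is_mstruct S \<Longrightarrow> (\<forall>i. v i \<in> car S) \<Longrightarrow> eval S v t \<in> car S"
  by (induction t) (auto simp: is_mstruct_def)

lemma soundness:
  assumes "derivable E r s" "is_mstruct S" "satisfies S E" "\<forall>i. v i \<in> car S"
  shows "eval S v r = eval S v s"
  using assms
proof (induction arbitrary: v rule: derivable.induct)
  case (ax l r \<sigma>)
  then show ?case unfolding eval_subst using eval_car[OF ax(2) ax(4)]
    by (auto simp: satisfies_def valid_in_def)
qed auto

definition Bmod :: "bool mstruct" where
  "Bmod = \<lparr>car = UNIV, zero = False, one = True, add = (\<noteq>), mul = (\<and>), neg = id, inv = id\<rparr>"

lemma not_01: "\<not> derivable Md Zero One"
proof
  assume "derivable Md Zero One"
  moreover have "is_mstruct Bmod" by (simp add: is_mstruct_def Bmod_def)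
  moreover have "satisfies Bmod Md" by (auto simp: satisfies_def valid_in_def Md_def Bmod_def Let_def)
  ultimately have "eval Bmod (\<lambda>_. True) Zero = eval Bmod (\<lambda>_. True) One"
    by (intro soundness) (auto simp: Bmod_def)
  then show False by (simp add: Bmod_def)
qed

lemma equivp_der: "equivp (derivable E)"
  by (intro equivpI reflpI sympI transpI) (auto intro: derivable.intros)

quotient_type fm = mterm / "derivable Md" by (rule equivp_der)

definition s3 :: "mterm \<Rightarrow> mterm \<Rightarrow> mterm \<Rightarrow> nat \<Rightarrow> mterm" where
  "s3 a b c = (\<lambda>i. if i = 0 then a else if i = 1 then b else c)"


lemma MdI: "(l, r) \<in> Md \<Longrightarrow> derivable Md (subst (s3 a b c) l) (subst (s3 a b c) r)"
  by (rule derivable.ax)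

lemma mem_Md:
  "(Add (Add (Var 0) (Var 1)) (Var 2), Add (Var 0) (Add (Var 1) (Var 2))) \<in> Md"
  "(Add (Var 0) (Var 1), Add (Var 1) (Var 0)) \<in> Md"
  "(Add (Var 0) Zero, Var 0) \<in> Md"
  "(Add (Var 0) (Neg (Var 0)), Zero) \<in> Md"
  "(Mul (Mul (Var 0) (Var 1)) (Var 2), Mul (Var 0) (Mul (Var 1) (Var 2))) \<in> Md"
  "(Mul (Var 0) (Var 1), Mul (Var 1) (Var 0)) \<in> Md"
  "(Mul One (Var 0), Var 0) \<in> Md"
  "(Mul (Var 0) (Add (Var 1) (Var 2)), Add (Mul (Var 0) (Var 1)) (Mul (Var 0) (Var 2))) \<in> Md"
  "(Inv (Inv (Var 0)), Var 0) \<in> Md"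
  "(Mul (Var 0) (Mul (Var 0) (Inv (Var 0))), Var 0) \<in> Md"
  by (simp_all add: Md_def Let_def)

lemma D:
  "derivable Md (Add (Add a b) c) (Add a (Add b c))"
  "derivable Md (Add a b) (Add b a)"
  "derivable Md (Add a Zero) a"
  "derivable Md (Add a (Neg a)) Zero"
  "derivable Md (Mul (Mul a b) c) (Mul a (Mul b c))"
  "derivable Md (Mul a b) (Mul b a)"
  "derivable Md (Mul One a) a"
  "derivable Md (Mul a (Add b c)) (Add (Mul a b) (Mul a c))"
  "derivable Md (Inv (Inv a)) a"
  "derivable Md (Mul a (Mul a (Inv a))) a"
  using MdI[OF mem_Md(1), of a b c] MdI[OF mem_Md(2), of a b c] MdI[OF mem_Md(3), of a b c]
    MdI[OF mem_Md(4), of a b c] MdI[OF mem_Md(5), of a b c] MdI[OF mem_Md(6), of a b c]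
    MdI[OF mem_Md(7), of a b c] MdI[OF mem_Md(8), of a b c] MdI[OF mem_Md(9), of a b c]
    MdI[OF mem_Md(10), of a b c]
  by (simp_all add: s3_def)

instantiation fm :: comm_ring_1 begin
lift_definition zero_fm :: fm is Zero .
lift_definition one_fm :: fm is One .
lift_definition plus_fm :: "fm \<Rightarrow> fm \<Rightarrow> fm" is Add by (rule derivable.cong_Add)
lift_definition times_fm :: "fm \<Rightarrow> fm \<Rightarrow> fm" is Mul by (rule derivable.cong_Mul)
lift_definition uminus_fm :: "fm \<Rightarrow> fm" is Neg by (rule derivable.cong_Neg)
definition minus_fm :: "fm \<Rightarrow> fm \<Rightarrow> fm" where "minus_fm a b = a + - b"
lemma fm_ax:
  fixes a b c :: fm
  shows "a + b + c = a + (b + c)" "a + b = b + a" "a + 0 = a" "a + - a = 0"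
    "a * b * c = a * (b * c)" "a * b = b * a" "1 * a = a" "a * (b + c) = a * b + a * c"
  by (transfer, rule D)+
instance
proof
  fix a b c :: fm
  show "a + b + c = a + (b + c)" "a + b = b + a" "a * b * c = a * (b * c)" "a * b = b * a" "1 * a = a"
    by (rule fm_ax)+
  show "0 + a = a" "- a + a = 0" by (metis fm_ax(2,3,4))+
  show "a - b = a + - b" by (simp add: minus_fm_def)
  show "(a + b) * c = a * c + b * c" by (metis fm_ax(6,8))
  show "(0::fm) \<noteq> 1" using not_01 by (simp add: zero_fm_def one_fm_def fm.abs_eq_iff)
qed
end


lift_definition finv :: "fm \<Rightarrow> fm" is Inv by (rule derivable.cong_Inv)

lemma finv_finv: "finv (finv x) = x" by transfer (rule D)
lemma finv_ax: "x * (x * finv x) = x" by transfer (rule D)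
lemma finv_alt: "finv x = x * finv x * finv x"
  using finv_ax[of "finv x"] by (simp add: finv_finv algebra_simps)

definition F0 :: "fm mstruct" where
  "F0 = \<lparr>car = UNIV, zero = 0, one = 1, add = (+), mul = (*), neg = uminus, inv = finv\<rparr>"

lemma eval_F0_Var: "eval F0 (\<lambda>i. abs_fm (Var i)) t = abs_fm t"
  by (induction t) (simp_all add: F0_def zero_fm_def one_fm_def plus_fm.abs_eq times_fm.abs_eq
      uminus_fm.abs_eq finv.abs_eq)

lemma F0_Md: "(l, r) \<in> Md \<Longrightarrow> eval F0 w l = eval F0 w r"
  by (auto simp: Md_def Let_def F0_def algebra_simps finv_finv finv_ax)

definition ideal :: "fm set \<Rightarrow> bool" where
  "ideal I \<longleftrightarrow> 0 \<in> I \<and> (\<forall>a\<in>I. \<forall>b\<in>I. a + b \<in> I) \<and> (\<forall>a\<in>I. \<forall>k. k * a \<in> I)"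

lemma ideal_0: "ideal I \<Longrightarrow> 0 \<in> I" by (simp add: ideal_def)
lemma ideal_add: "ideal I \<Longrightarrow> a \<in> I \<Longrightarrow> b \<in> I \<Longrightarrow> a + b \<in> I" by (simp add: ideal_def)
lemma ideal_multL: "ideal I \<Longrightarrow> a \<in> I \<Longrightarrow> k * a \<in> I" by (simp add: ideal_def)
lemma ideal_multR: "ideal I \<Longrightarrow> a \<in> I \<Longrightarrow> a * k \<in> I" by (metis ideal_multL mult.commute)
lemma ideal_uminus: "ideal I \<Longrightarrow> a \<in> I \<Longrightarrow> - a \<in> I" using ideal_multL[of I a "-1"] by simp
lemma ideal_diff: "ideal I \<Longrightarrow> a \<in> I \<Longrightarrow> b \<in> I \<Longrightarrow> a - b \<in> I"
  using ideal_add[of I a "-b"] ideal_uminus by simp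

lemma exists_max:
  assumes "e \<noteq> 0"
  shows "\<exists>M. ideal M \<and> e \<notin> M \<and> (\<forall>J. ideal J \<and> e \<notin> J \<and> M \<subseteq> J \<longrightarrow> J = M)"
proof -
  let ?A = "{I. ideal I \<and> e \<notin> I}"
  have "\<forall>C\<in>chains ?A. \<exists>U\<in>?A. \<forall>X\<in>C. X \<subseteq> U"
  proof
    fix C assume C: "C \<in> chains ?A"
    show "\<exists>U\<in>?A. \<forall>X\<in>C. X \<subseteq> U"
    proof (cases "C = {}")
      case True
      have "ideal {0}" by (simp add: ideal_def)
      then show ?thesis using True assms by auto
    next
      case False
      have sub: "C \<subseteq> ?A" and ch: "\<forall>X\<in>C. \<forall>Y\<in>C. X \<subseteq> Y \<or> Y \<subseteq> X"
        using C by (auto simp: chains_def chain_subset_def)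
      have "ideal (\<Union>C)"
        unfolding ideal_def
      proof (intro conjI ballI allI)
        show "0 \<in> \<Union>C" using False sub ideal_0 by blast
      next
        fix a b assume "a \<in> \<Union>C" "b \<in> \<Union>C"
        then obtain X Y where XY: "X \<in> C" "Y \<in> C" "a \<in> X" "b \<in> Y" by blast
        show "a + b \<in> \<Union>C"
        proof (cases "X \<subseteq> Y")
          case True then show ?thesis using XY sub ideal_add[of Y a b] by blast
        next
          case False then have "Y \<subseteq> X" using ch XY by blast
          then show ?thesis using XY sub ideal_add[of X a b] by blast
        qed
      next
        fix a k assume "a \<in> \<Union>C"
        then show "k * a \<in> \<Union>C" using sub ideal_multL by blast
      qed
      then show ?thesis using sub by auto
    qed
  qed
  from Zorn_Lemma2[OF this] show ?thesis by blast
qed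

lemma prime_max:
  assumes M: "ideal M" "e \<notin> M" "\<forall>J. ideal J \<and> e \<notin> J \<and> M \<subseteq> J \<longrightarrow> J = M"
    and ee: "e * e = e" and ab: "a * b \<in> M"
  shows "a \<in> M \<or> b \<in> M"
proof (rule ccontr)
  assume nab: "\<not> (a \<in> M \<or> b \<in> M)"
  have gen: "\<exists>m k. m \<in> M \<and> e = m + k * x" if x: "x \<notin> M" for x
  proof -
    let ?J = "{m + k * x |m k. m \<in> M}"
    have "ideal ?J"
      unfolding ideal_def
    proof (intro conjI ballI allI)
      show "0 \<in> ?J" using ideal_0[OF M(1)] by (metis (mono_tags, lifting) add_0 mem_Collect_eq mult_zero_left)
    next
      fix p q assume "p \<in> ?J" "q \<in> ?J"
      then obtain m1 k1 m2 k2 where "p = m1 + k1 * x" "q = m2 + k2 * x" "m1 \<in> M" "m2 \<in> M" by blast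
      then have "p + q = (m1 + m2) + (k1 + k2) * x" "m1 + m2 \<in> M"
        by (auto simp: algebra_simps intro: ideal_add[OF M(1)])
      then show "p + q \<in> ?J" by blast
    next
      fix p k assume "p \<in> ?J"
      then obtain m1 k1 where "p = m1 + k1 * x" "m1 \<in> M" by blast
      then have "k * p = k * m1 + (k * k1) * x" "k * m1 \<in> M"
        by (auto simp: algebra_simps intro: ideal_multL[OF M(1)])
      then show "k * p \<in> ?J" by blast
    qed
    moreover have "M \<subseteq> ?J"
    proof
      fix m assume "m \<in> M"
      moreover have "m = m + 0 * x" by simp
      ultimately show "m \<in> ?J" by blast
    qed
    moreover have "x \<in> ?J" using ideal_0[OF M(1)] by (metis (mono_tags, lifting) add_0 mem_Collect_eq mult_1)
    ultimately have "e \<in> ?J" using M(3) x by blast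
    then show ?thesis by blast
  qed
  obtain m1 k1 where 1: "m1 \<in> M" "e = m1 + k1 * a" using gen nab by blast
  obtain m2 k2 where 2: "m2 \<in> M" "e = m2 + k2 * b" using gen nab by blast
  have "e = (m1 + k1 * a) * (m2 + k2 * b)" using ee 1(2) 2(2) by metis
  also have "\<dots> = m1 * (m2 + k2 * b) + (k1 * a) * m2 + (k1 * k2) * (a * b)"
    by (simp add: algebra_simps)
  also have "\<dots> \<in> M"
    by (intro ideal_add[OF M(1)] ideal_multR[OF M(1) 1(1)] ideal_multL[OF M(1) 2(1)] ideal_multL[OF M(1) ab])
  finally show False using M(2) by simp
qed

lemma IL_prime:
  assumes "ideal M" "\<forall>a b. a * b \<in> M \<longrightarrow> a \<in> M \<or> b \<in> M" "x \<notin> M"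
  shows "x * finv x - 1 \<in> M"
proof -
  have "(x * finv x - 1) * x = 0"
    using finv_ax[of x] by (simp add: algebra_simps)
  then show ?thesis using assms ideal_0 by metis
qed

lemma finv_compat:
  assumes M: "ideal M" and P: "\<forall>a b. a * b \<in> M \<longrightarrow> a \<in> M \<or> b \<in> M" and xy: "x - y \<in> M"
  shows "finv x - finv y \<in> M"
proof (cases "x \<in> M")
  case True
  then have "y \<in> M" using ideal_diff[OF M True xy] by simp
  have "finv x \<in> M" using finv_alt[of x] True ideal_multL[OF M] ideal_multR[OF M] by metis
  moreover have "finv y \<in> M" using finv_alt[of y] \<open>y \<in> M\<close> ideal_multL[OF M] ideal_multR[OF M] by metis
  ultimately show ?thesis by (rule ideal_diff[OF M])
next
  case False
  then have "y \<notin> M" using ideal_add[OF M xy, of y] by auto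
  have a: "x * finv x - 1 \<in> M" "y * finv y - 1 \<in> M" using IL_prime[OF M P] False \<open>y \<notin> M\<close> by auto
  have "finv x - finv y = (y * finv y - 1) * (- finv x) + (x * finv x - 1) * finv y + (finv x * finv y) * (x - y) * (-1)"
    by (simp add: algebra_simps)
  also have "\<dots> \<in> M" using a xy
    by (intro ideal_add[OF M] ideal_multL[OF M] ideal_multR[OF M])
  finally show ?thesis .
qed


definition tr :: "('b \<Rightarrow> 'a) \<Rightarrow> 'b mstruct \<Rightarrow> 'a mstruct" where
  "tr h T = \<lparr>car = h ` car T, zero = h (zero T), one = h (one T),
     add = \<lambda>a b. h (add T (inv_into UNIV h a) (inv_into UNIV h b)), mul = \<lambda>a b. h (mul T (inv_into UNIV h a) (inv_into UNIV h b)),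
     neg = \<lambda>a. h (neg T (inv_into UNIV h a)), inv = \<lambda>a. h (mstruct.inv T (inv_into UNIV h a))\<rparr>"

lemma hinv1: "inj h \<Longrightarrow> x \<in> h ` A \<Longrightarrow> h (inv_into UNIV h x) = x" by (auto simp: inv_f_f)
lemma hinv2: "inj h \<Longrightarrow> x \<in> h ` A \<Longrightarrow> inv_into UNIV h x \<in> A" by (auto simp: inv_f_f)

lemma eval_tr:
  assumes "inj h" "\<forall>i. v i \<in> h ` car T"
  shows "eval (tr h T) v t = h (eval T (inv_into UNIV h \<circ> v) t)"
proof -
  have "\<forall>i. h (inv_into UNIV h (v i)) = v i" using assms hinv1 by metis
  then show ?thesis by (induction t) (auto simp: tr_def inv_f_f[OF assms(1)])
qed

lemma tr_cm:
  assumes h: "inj h" and T: "cancellation_meadow T"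
  shows "cancellation_meadow (tr h T)"
proof -
  have ms: "is_mstruct T" and sat: "satisfies T Md" and il: "satisfies_IL T"
    using T by (auto simp: cancellation_meadow_def)
  have "is_mstruct (tr h T)" using ms h by (auto simp: is_mstruct_def tr_def)
  moreover have "satisfies (tr h T) Md"
    unfolding satisfies_def valid_in_def
  proof (intro ballI allI impI, clarify)
    fix l r and v :: "nat \<Rightarrow> 'b" assume lr: "(l, r) \<in> Md" and v: "\<forall>i. v i \<in> car (tr h T)"
    then have v': "\<forall>i. v i \<in> h ` car T" by (simp add: tr_def)
    have "\<forall>i. (inv_into UNIV h \<circ> v) i \<in> car T" using v' h hinv2 by (metis comp_apply)
    then have "eval T (inv_into UNIV h \<circ> v) l = eval T (inv_into UNIV h \<circ> v) r"
      using sat lr by (auto simp: satisfies_def valid_in_def)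
    then show "eval (tr h T) v l = eval (tr h T) v r" using eval_tr[OF h v'] by simp
  qed
  moreover have "satisfies_IL (tr h T)"
    unfolding satisfies_IL_def
  proof (intro ballI impI)
    fix x assume "x \<in> car (tr h T)" "x \<noteq> zero (tr h T)"
    then obtain y where y: "y \<in> car T" "x = h y" "y \<noteq> zero T" by (auto simp: tr_def)
    then show "mul (tr h T) x (mstruct.inv (tr h T) x) = one (tr h T)"
      using il h by (simp add: tr_def inv_f_f satisfies_IL_def)
  qed
  ultimately show ?thesis by (simp add: cancellation_meadow_def)
qed

lemma tr_notvalid:
  assumes h: "inj h" and nv: "\<not> valid_in T r s"
  shows "\<not> valid_in (tr h T) r s"
proof
  assume V: "valid_in (tr h T) r s"
  from nv obtain v where v: "\<forall>i. v i \<in> car T" "eval T v r \<noteq> eval T v s"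
    by (auto simp: valid_in_def)
  have v': "\<forall>i. (h \<circ> v) i \<in> h ` car T" using v by auto
  have "inv_into UNIV h \<circ> (\<lambda>i. h (v i)) = v" using h by (auto simp: inv_f_f)
  moreover have "eval (tr h T) (h \<circ> v) r = eval (tr h T) (h \<circ> v) s"
    using V v' by (auto simp: valid_in_def tr_def)
  ultimately have "h (eval T v r) = h (eval T v s)" using eval_tr[OF h v', of r] eval_tr[OF h v', of s] by simp
  then show False using v(2) h by (auto dest: injD)
qed

instance mterm :: countable by countable_datatype

lemma inj_rep: "inj rep_fm"
  by (metis Quotient3_abs_rep Quotient3_fm injI)

lemma exists_inj: "\<exists>h :: fm \<Rightarrow> 'a::infinite. inj h"
proof -
  obtain f :: "nat \<Rightarrow> 'a" where "inj f" using infinite_countable_subset[OF infinite_UNIV] by auto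
  then have "inj (f \<circ> to_nat \<circ> rep_fm)" using inj_rep by (intro inj_compose) auto
  then show ?thesis by blast
qed


lemma cong_lemmas:
  assumes M: "ideal M"
  shows "a - a' \<in> M \<Longrightarrow> b - b' \<in> M \<Longrightarrow> (a + b) - (a' + b') \<in> M"
    and "a - a' \<in> M \<Longrightarrow> b - b' \<in> M \<Longrightarrow> (a * b) - (a' * b') \<in> M"
    and "a - a' \<in> M \<Longrightarrow> (- a) - (- a') \<in> M"
proof -
  assume "a - a' \<in> M" "b - b' \<in> M"
  then have "(a - a') + (b - b') \<in> M" by (rule ideal_add[OF M])
  then show "(a + b) - (a' + b') \<in> M" by (simp add: algebra_simps)
next
  assume "a - a' \<in> M" "b - b' \<in> M"
  then have "a * (b - b') + (a - a') * b' \<in> M" by (intro ideal_add[OF M] ideal_multL[OF M] ideal_multR[OF M])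
  then show "(a * b) - (a' * b') \<in> M" by (simp add: algebra_simps)
next
  assume "a - a' \<in> M"
  then have "- (a - a') \<in> M" by (rule ideal_uminus[OF M])
  then show "(- a) - (- a') \<in> M" by (simp add: algebra_simps)
qed

lemma diff_swap: "ideal M \<Longrightarrow> a - b \<in> M \<Longrightarrow> b - a \<in> M"
  using ideal_uminus by (metis minus_diff_eq)

lemma F0_cong:
  assumes M: "ideal M" and P: "\<forall>a b. a * b \<in> M \<longrightarrow> a \<in> M \<or> b \<in> M"
    and vw: "\<forall>i. v i - w i \<in> M"
  shows "eval F0 v t - eval F0 w t \<in> M"
  by (induction t) (auto simp: F0_def vw ideal_0[OF M] cong_lemmas[OF M] finv_compat[OF M P] intro: diff_swap[OF M])

lemma completeness_fm:
  assumes nd: "\<not> derivable Md r s"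
  shows "\<exists>T :: fm mstruct. cancellation_meadow T \<and> \<not> valid_in T r s"
proof -
  define d where "d = abs_fm r - abs_fm s"
  define e where "e = d * finv d"
  have "e * e = (d * (d * finv d)) * finv d" by (simp add: e_def algebra_simps)
  then have ee: "e * e = e" by (simp add: finv_ax e_def)
  have e0: "e \<noteq> 0"
  proof
    assume "e = 0"
    then have "d = 0" using finv_ax[of d] by (simp add: e_def)
    then have "abs_fm r = abs_fm s" by (simp add: d_def)
    then show False using nd by (simp add: fm.abs_eq_iff)
  qed
  obtain M where M: "ideal M" "e \<notin> M" "\<forall>J. ideal J \<and> e \<notin> J \<and> M \<subseteq> J \<longrightarrow> J = M"
    using exists_max[OF e0] by blast
  have P: "\<forall>a b. a * b \<in> M \<longrightarrow> a \<in> M \<or> b \<in> M" using prime_max[OF M ee] by blast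
  define c where "c x = (SOME y. x - y \<in> M)" for x
  have c1: "x - c x \<in> M" for x
    unfolding c_def by (rule someI[of "\<lambda>y. x - y \<in> M" x]) (simp add: ideal_0[OF M(1)])
  have c2: "c x = c y" if "x - y \<in> M" for x y
  proof -
    have "(\<lambda>z. x - z \<in> M) = (\<lambda>z. y - z \<in> M)"
    proof
      fix z
      have "x - z = (x - y) + (y - z)" "y - z = (x - z) - (x - y)" by simp_all
      then show "(x - z \<in> M) = (y - z \<in> M)" using that ideal_add[OF M(1)] ideal_diff[OF M(1)] by metis
    qed
    then show ?thesis by (simp add: c_def)
  qed
  have c3: "c (c x) = c x" for x using c2[OF c1[of x]] by simp
  have c4: "x = y" if "x \<in> range c" "y \<in> range c" "x - y \<in> M" for x y
    using that c2[OF that(3)] c3 by auto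
  have cM: "c a - b \<in> M" if "a - b \<in> M" for a b
  proof -
    have eq: "c a - b = (a - b) - (a - c a)" by simp
    show ?thesis unfolding eq using ideal_diff[OF M(1) that c1[of a]] .
  qed
  define T :: "fm mstruct" where "T = \<lparr>car = range c, zero = c 0, one = c 1,
     add = \<lambda>a b. c (a + b), mul = \<lambda>a b. c (a * b), neg = \<lambda>a. c (- a), inv = \<lambda>a. c (finv a)\<rparr>"
  have evr: "eval T v t \<in> range c" if "\<forall>i. v i \<in> range c" for v t
    using that by (induction t) (auto simp: T_def)
  have Ts: "zero T = c 0" "one T = c 1" "add T = (\<lambda>a b. c (a + b))" "mul T = (\<lambda>a b. c (a * b))"
    "neg T = (\<lambda>a. c (- a))" "mstruct.inv T = (\<lambda>a. c (finv a))" by (simp_all add: T_def)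
  have F0s: "zero F0 = 0" "one F0 = 1" "add F0 = (+)" "mul F0 = (*)"
    "neg F0 = uminus" "mstruct.inv F0 = finv" by (simp_all add: F0_def)
  have evM: "eval T v t - eval F0 v t \<in> M" for v t
  proof (induction t)
    case (Var x) then show ?case by (simp add: ideal_0[OF M(1)])
  next
    case Zero then show ?case by (simp only: eval.simps Ts F0s) (rule cM, simp add: ideal_0[OF M(1)])
  next
    case One then show ?case by (simp only: eval.simps Ts F0s) (rule cM, simp add: ideal_0[OF M(1)])
  next
    case (Add t1 t2) then show ?case
      by (simp only: eval.simps Ts F0s) (rule cM, rule cong_lemmas(1)[OF M(1)], assumption+)
  next
    case (Mul t1 t2) then show ?case
      by (simp only: eval.simps Ts F0s) (rule cM, rule cong_lemmas(2)[OF M(1)], assumption+)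
  next
    case (Neg t1) then show ?case
      by (simp only: eval.simps Ts F0s) (rule cM, rule cong_lemmas(3)[OF M(1)], assumption+)
  next
    case (Inv t1) then show ?case
      by (simp only: eval.simps Ts F0s) (rule cM, rule finv_compat[OF M(1) P], assumption+)
  qed
  have "is_mstruct T" by (simp add: T_def is_mstruct_def)
  moreover have "satisfies T Md"
    unfolding satisfies_def valid_in_def
  proof (intro ballI allI impI, clarify)
    fix l rr and v :: "nat \<Rightarrow> fm" assume lr: "(l, rr) \<in> Md" and v: "\<forall>i. v i \<in> car T"
    have "eval T v l - eval T v rr = (eval T v l - eval F0 v l) - (eval T v rr - eval F0 v rr)"
      using F0_Md[OF lr] by simp
    also have "\<dots> \<in> M" by (rule ideal_diff[OF M(1) evM evM])
    finally show "eval T v l = eval T v rr" using v evr by (intro c4) (auto simp: T_def)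
  qed
  moreover have "satisfies_IL T"
    unfolding satisfies_IL_def
  proof (intro ballI impI)
    fix x assume x: "x \<in> car T" "x \<noteq> zero T"
    have xc: "x \<in> range c" using x by (simp add: T_def)
    have "x \<notin> M"
    proof
      assume "x \<in> M"
      then have "c x = c 0" by (intro c2) simp
      then show False using x xc c3 by (auto simp: T_def)
    qed
    then have il: "x * finv x - 1 \<in> M" by (rule IL_prime[OF M(1) P])
    have "x * c (finv x) - 1 = x * (- (finv x - c (finv x))) + (x * finv x - 1)"
      by (simp add: algebra_simps)
    also have "\<dots> \<in> M" using il c1 by (intro ideal_add[OF M(1)] ideal_multL[OF M(1)] ideal_uminus[OF M(1)])
    finally show "mul T x (mstruct.inv T x) = one T" by (simp add: T_def c2)
  qed
  moreover have "\<not> valid_in T r s"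
  proof
    assume V: "valid_in T r s"
    define w where "w i = abs_fm (Var i)" for i
    define v where "v i = c (w i)" for i
    have vT: "\<forall>i. v i \<in> car T" by (simp add: T_def v_def)
    have vw: "\<forall>i. v i - w i \<in> M"
      using c1 ideal_uminus[OF M(1)] by (metis minus_diff_eq v_def)
    have wr: "eval F0 w t = abs_fm t" for t unfolding w_def by (rule eval_F0_Var)
    have k: "eval T v t - abs_fm t \<in> M" for t
    proof -
      have "eval T v t - abs_fm t = (eval T v t - eval F0 v t) + (eval F0 v t - eval F0 w t)"
        by (simp add: wr)
      also have "\<dots> \<in> M" by (rule ideal_add[OF M(1) evM F0_cong[OF M(1) P vw]])
      finally show ?thesis .
    qed
    have eq: "eval T v r = eval T v s" using V vT by (simp add: valid_in_def)
    have "d = (eval T v s - abs_fm s) - (eval T v r - abs_fm r)" by (simp add: d_def eq)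
    also have "\<dots> \<in> M" by (rule ideal_diff[OF M(1) k k])
    finally have "e \<in> M" unfolding e_def by (rule ideal_multR[OF M(1)])
    then show False using M(2) by simp
  qed
  ultimately show ?thesis by (auto simp: cancellation_meadow_def)
qed

theorem corollary1:
  fixes r s :: mterm
  shows "derivable Md r s \<longleftrightarrow>
    (\<forall>S :: ('a::infinite) mstruct. cancellation_meadow S \<longrightarrow> valid_in S r s)"
proof
  assume "derivable Md r s"
  then show "\<forall>S :: 'a mstruct. cancellation_meadow S \<longrightarrow> valid_in S r s"
    by (auto simp: cancellation_meadow_def valid_in_def intro: soundness)
next
  assume A: "\<forall>S :: 'a mstruct. cancellation_meadow S \<longrightarrow> valid_in S r s"
  show "derivable Md r s"
  proof (rule ccontr)
    assume "\<not> derivable Md r s"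
    then obtain T :: "fm mstruct" where T: "cancellation_meadow T" "\<not> valid_in T r s"
      using completeness_fm by blast
    obtain h :: "fm \<Rightarrow> 'a" where h: "inj h" using exists_inj by blast
    show False using A tr_cm[OF h T(1)] tr_notvalid[OF h T(2)] by blast
  qed
qed

end
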